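(* Let $n\in\mathbb{N}_0$. For $0\le k\le n/2$, the polynomial $r_{n,2k}:=2\sum_{0\le j\le n/2}M^{(n)}_{2j,2k}b_{n,2j}+b_{n,2k}$ is totally symmetric, and for $0\le k\le (n-1)/2$ the polynomial $r_{n,2k+1}:=-2\sum_{0\le j\le (n-1)/2}M^{(n)}_{2j+1,2k+1}b_{n,2j+1}+b_{n,2k+1}$ satisfies $Mr_{n,2k+1}=-r_{n,2k+1}=Rr_{n,2k+1}$.
   Context: $\widehat T$ is the triangle with vertices $(0,0),(1,0),(0,1)$. $P_m^{(\alpha,\beta)}$ are the Jacobi polynomials with $P_m^{(\alpha,\beta)}(1)=(\alpha+1)_m/m!$; $P_k^{(0,0)}$ are the Legendre polynomials. For $0\le k\le n$, $b_{n,k}(x_1,x_2):=(x_1+x_2)^kP^{(0,2k+1)}_{n-k}(2(x_1+x_2)-1)P^{(0,0)}_k\!\left(\frac{x_1-x_2}{x_1+x_2}\right)$; these form a basis of the space $\mathbb{P}^\perp_{n,n-1}(\widehat T)$ of polynomials of degree $\le n$ that are $L^2(\widehat T)$-orthogonal to all polynomials of degree $\le n-1$. Define $Mp(x_1,x_2):=p(1-x_1-x_2,x_2)$ and $Rp(x_1,x_2):=p(x_2,x_1)$, and let $M^{(n)}_{j,k}$ be the matrix entries of $M$ in this basis: $Mb_{n,k}=\sum_{j=0}^n b_{n,j}M^{(n)}_{j,k}$. A function $u$ on $\widehat T$ is totally symmetric if $u\circ\chi=u$ for every affine bijection $\chi$ of $\widehat T$ onto itself (equivalently $Ru=u=Mu$).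 *)

theory Defs
  imports Complex_Main
begin

definition Tref :: "(real \<times> real) set" where
  "Tref = {(x1, x2). 0 \<le> x1 \<and> 0 \<le> x2 \<and> x1 + x2 \<le> 1}"

text \<open>Jacobi polynomial P_m^(a,b) for integer parameters a, b >= 0 (explicit formula;
  normalisation P_m^(a,b)(1) = (a+1)_m / m! = (m+a choose m)).\<close>
definition jacobi :: "nat \<Rightarrow> nat \<Rightarrow> nat \<Rightarrow> real \<Rightarrow> real" where
  "jacobi a b m x = (\<Sum>s\<le>m. real ((m + a) choose (m - s)) * real ((m + b) choose s)
       * ((x - 1) / 2) ^ s * ((x + 1) / 2) ^ (m - s))"

text \<open>Homogenised Jacobi polynomial: jacobi_hom a b m u v = v^m * P_m^(a,b)(u/v) for v \<noteq> 0
  (lemma jacobi_hom_eq below); it is a polynomial in (u,v), giving the polynomial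
  value of (x1+x2)^k P_k((x1-x2)/(x1+x2)) also at x1+x2 = 0.\<close>
definition jacobi_hom :: "nat \<Rightarrow> nat \<Rightarrow> nat \<Rightarrow> real \<Rightarrow> real \<Rightarrow> real" where
  "jacobi_hom a b m u v = (\<Sum>s\<le>m. real ((m + a) choose (m - s)) * real ((m + b) choose s)
       * ((u - v) / 2) ^ s * ((u + v) / 2) ^ (m - s))"

lemma jacobi_hom_eq:
  assumes "v \<noteq> 0"
  shows "jacobi_hom a b m u v = v ^ m * jacobi a b m (u / v)"
proof -
  have "((u - v) / 2) ^ s * ((u + v) / 2) ^ (m - s)
        = v ^ m * (((u / v - 1) / 2) ^ s * ((u / v + 1) / 2) ^ (m - s))" if "s \<le> m" for s
  proof -
    have 1: "(u - v) / 2 = v * ((u / v - 1) / 2)" "(u + v) / 2 = v * ((u / v + 1) / 2)"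
      using assms by (simp_all add: field_simps)
    have "v ^ s * v ^ (m - s) = v ^ m" using that by (simp add: power_add[symmetric])
    then show ?thesis unfolding 1 power_mult_distrib by (simp add: mult_ac)
  qed
  then show ?thesis
    unfolding jacobi_hom_def jacobi_def sum_distrib_left
    by (intro sum.cong) (simp_all add: mult_ac)
qed

text \<open>The basis b_{n,k} of P^perp_{n,n-1}(T):
  b_{n,k}(x1,x2) = (x1+x2)^k P^(0,2k+1)_{n-k}(2(x1+x2)-1) P^(0,0)_k((x1-x2)/(x1+x2)).\<close>
definition bbasis :: "nat \<Rightarrow> nat \<Rightarrow> real \<times> real \<Rightarrow> real" where
  "bbasis n k x = (case x of (x1, x2) \<Rightarrow>
      jacobi 0 (2 * k + 1) (n - k) (2 * (x1 + x2) - 1) * jacobi_hom 0 0 k (x1 - x2) (x1 + x2))"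

definition Mop :: "(real \<times> real \<Rightarrow> real) \<Rightarrow> real \<times> real \<Rightarrow> real" where
  "Mop p x = (case x of (x1, x2) \<Rightarrow> p (1 - x1 - x2, x2))"

definition Rop :: "(real \<times> real \<Rightarrow> real) \<Rightarrow> real \<times> real \<Rightarrow> real" where
  "Rop p x = (case x of (x1, x2) \<Rightarrow> p (x2, x1))"

definition Mmat :: "nat \<Rightarrow> nat \<Rightarrow> nat \<Rightarrow> real" where
  "Mmat n j k = (THE c :: nat \<Rightarrow> real. (\<forall>i>n. c i = 0) \<and>
       (\<forall>x. Mop (bbasis n k) x = (\<Sum>i\<le>n. bbasis n i x * c i))) j"

definition affine_map2 :: "real \<Rightarrow> real \<Rightarrow> real \<Rightarrow> real \<Rightarrow> real \<Rightarrow> real \<Rightarrow> real \<times> real \<Rightarrow> real \<times> real" where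
  "affine_map2 a b c d e f x = (case x of (x1, x2) \<Rightarrow> (a * x1 + b * x2 + e, c * x1 + d * x2 + f))"

definition totally_symmetric :: "(real \<times> real \<Rightarrow> real) \<Rightarrow> bool" where
  "totally_symmetric u \<longleftrightarrow>
     (\<forall>a b c d e f. bij_betw (affine_map2 a b c d e f) Tref Tref \<longrightarrow>
        (\<forall>x\<in>Tref. u (affine_map2 a b c d e f x) = u x))"

end

theory Submission
  imports Defs "HOL-Computational_Algebra.Polynomial"
begin


type_synonym pp = "real poly poly"

definition D2 :: "pp \<Rightarrow> pp" where "D2 p = map_poly pderiv p"

lemma coeff_D2: "coeff (D2 p) i = pderiv (coeff p i)"
  unfolding D2_def by (simp add: coeff_map_poly)

lemma D2_add: "D2 (p + q) = D2 p + D2 q"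
  by (rule poly_eqI) (simp add: coeff_D2 pderiv_add)
lemma D2_diff: "D2 (p - q) = D2 p - D2 q"
  by (rule poly_eqI) (simp add: coeff_D2 pderiv_diff)
lemma D2_minus: "D2 (- p) = - D2 p"
  by (rule poly_eqI) (simp add: coeff_D2 pderiv_minus)
lemma D2_0[simp]: "D2 0 = 0"
  by (rule poly_eqI) (simp add: coeff_D2)
lemma D2_sum: "D2 (sum f A) = sum (\<lambda>i. D2 (f i)) A"
  by (induction A rule: infinite_finite_induct) (auto simp: D2_add)
lemma pderiv_sum: "pderiv (sum f A) = sum (\<lambda>i. pderiv (f i)) A"
  by (induction A rule: infinite_finite_induct) (auto simp: pderiv_add)

lemma D2_mult: "D2 (p * q) = D2 p * q + p * D2 q"
proof (rule poly_eqI)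
  fix n
  show "coeff (D2 (p * q)) n = coeff (D2 p * q + p * D2 q) n"
    unfolding coeff_D2 coeff_add coeff_mult pderiv_sum pderiv_mult sum.distrib
    by (simp add: add.commute mult.commute)
qed
lemma D2_pCons: "D2 (pCons a p) = pCons (pderiv a) (D2 p)"
  by (rule poly_eqI) (simp add: coeff_D2 coeff_pCons split: nat.split)
lemma D2_const[simp]: "D2 [:a:] = [:pderiv a:]"
  by (simp add: D2_pCons)
lemma D1_D2: "pderiv (D2 p) = D2 (pderiv p)"
  by (rule poly_eqI) (simp add: coeff_D2 coeff_pderiv pderiv_mult del: of_nat_Suc)
lemma D2_smult: "D2 (smult a p) = smult (pderiv a) p + smult a (D2 p)"
  by (rule poly_eqI) (simp add: coeff_D2 pderiv_mult algebra_simps)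

lemma D2_pcompose: "D2 (pcompose p q) = pcompose (D2 p) q + pcompose (pderiv p) q * D2 q"
proof (induction p)
  case 0 then show ?case by simp
next
  case (pCons a p)
  show ?case
    by (simp add: pcompose_pCons D2_add D2_mult pCons.IH D2_pCons pderiv_pCons pcompose_add algebra_simps)
qed

definition X1 :: pp where "X1 = [:0,1:]"
definition X2 :: pp where "X2 = [:[:0,1:]:]"

definition Lop :: "pp \<Rightarrow> pp" where
  "Lop p = X1*(1-X1)*pderiv(pderiv p) - 2*X1*X2*pderiv(D2 p) + X2*(1-X2)*D2(D2 p)
     + (1 - 3*X1)*pderiv p + (1-3*X2)*D2 p"

definition Gam :: "pp \<Rightarrow> pp \<Rightarrow> pp" where
  "Gam g h = X1*(1-X1)*pderiv g*pderiv h - X1*X2*(pderiv g*D2 h + D2 g*pderiv h) + X2*(1-X2)*D2 g*D2 h"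

lemma Lop_mult: "Lop (g*h) = g*Lop h + h*Lop g + 2*Gam g h"
  unfolding Lop_def Gam_def
  by (simp add: pderiv_mult D2_mult pderiv_add D2_add D1_D2 algebra_simps)

lemma Lop_add: "Lop (g+h) = Lop g + Lop h"
  unfolding Lop_def by (simp add: pderiv_add D2_add algebra_simps)
lemma Lop_diff: "Lop (g-h) = Lop g - Lop h"
  unfolding Lop_def by (simp add: pderiv_diff D2_diff algebra_simps)
lemma Lop_0[simp]: "Lop 0 = 0" unfolding Lop_def by simp
lemma Lop_smult_const: "Lop (smult [:c:] g) = smult [:c:] (Lop g)"
proof -
  have e: "smult [:c:] g = [:[:c:]:] * g" by simp
  have "Lop [:[:c:]:] = 0" "Gam [:[:c:]:] g = 0"
    unfolding Lop_def Gam_def by (simp_all add: pderiv_pCons)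
  then show ?thesis unfolding e Lop_mult by simp
qed
lemma Lop_sum: "Lop (sum f A) = sum (\<lambda>i. Lop (f i)) A"
  by (induction A rule: infinite_finite_induct) (auto simp: Lop_add)

definition Qm :: pp where "Qm = 1 - X1 - X2"
definition Mp :: "pp \<Rightarrow> pp" where "Mp p = pcompose p Qm"

lemma D2_one[simp]: "D2 1 = 0"
  using D2_const[of 1] by (simp add: one_pCons[symmetric] del: D2_const)
lemma D2_X1[simp]: "D2 X1 = 0" by (simp add: X1_def D2_pCons)
lemma D2_X2[simp]: "D2 X2 = 1" by (simp add: X2_def one_pCons pderiv_pCons)
lemma pderiv_X1[simp]: "pderiv X1 = 1" by (simp add: X1_def pderiv_pCons)
lemma pderiv_X2[simp]: "pderiv X2 = 0" by (simp add: X2_def pderiv_pCons)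
lemma pderiv_Qm: "pderiv Qm = -1" by (simp add: Qm_def pderiv_diff)
lemma D2_Qm: "D2 Qm = -1" by (simp add: Qm_def D2_diff)

lemma dM1: "pderiv (Mp p) = - Mp (pderiv p)"
  by (simp add: Mp_def pderiv_pcompose pderiv_Qm)
lemma dM2: "D2 (Mp p) = Mp (D2 p) - Mp (pderiv p)"
  by (simp add: Mp_def D2_pcompose D2_Qm)
lemma Mp_mult: "Mp (p*q) = Mp p * Mp q" by (simp add: Mp_def pcompose_mult)
lemma Mp_add: "Mp (p+q) = Mp p + Mp q" by (simp add: Mp_def pcompose_add)
lemma Mp_diff: "Mp (p-q) = Mp p - Mp q" by (simp add: Mp_def pcompose_diff)
lemma Mp_minus: "Mp (-p) = - Mp p" by (simp add: Mp_def pcompose_uminus)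
lemma Mp_one: "Mp 1 = 1" by (simp add: Mp_def pcompose_1)
lemma Mp_numeral: "Mp (numeral n) = numeral n"
  by (metis Mp_def pcompose_const numeral_poly(1)) 
lemma Mp_X1: "Mp X1 = Qm" by (simp add: Mp_def X1_def pcompose_pCons)
lemma Mp_X2: "Mp X2 = X2" by (simp add: Mp_def X2_def)

lemma Lop_Mp: "Lop (Mp p) = Mp (Lop p)"
  unfolding Lop_def
  by (simp add: dM1 dM2 pderiv_diff D2_diff pderiv_minus D2_minus Mp_mult Mp_add Mp_diff Mp_minus Mp_one
     Mp_numeral Mp_X1 Mp_X2 D1_D2 Qm_def algebra_simps)

definition ev :: "pp \<Rightarrow> real \<Rightarrow> real \<Rightarrow> real" where "ev p x1 x2 = poly (poly p [:x1:]) x2"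

lemma ev_pCons: "ev (pCons a p) y z = poly a z + y * ev p y z"
  by (simp add: ev_def)
lemma ev_mult: "ev (p*q) y z = ev p y z * ev q y z" by (simp add: ev_def)
lemma ev_add: "ev (p+q) y z = ev p y z + ev q y z" by (simp add: ev_def)
lemma ev_diff: "ev (p-q) y z = ev p y z - ev q y z" by (simp add: ev_def)
lemma ev_sum: "ev (sum f A) y z = (\<Sum>i\<in>A. ev (f i) y z)" by (simp add: ev_def poly_sum)
lemma ev_const: "ev [:a:] y z = poly a z" by (simp add: ev_def)
lemma ev_smult: "ev (smult a p) y z = poly a z * ev p y z" by (simp add: ev_def)
lemma ev_power: "ev (p^n) y z = ev p y z ^ n" by (simp add: ev_def poly_power)
lemma ev_X1: "ev X1 y z = y" by (simp add: ev_def X1_def)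
lemma ev_X2: "ev X2 y z = z" by (simp add: ev_def X2_def)
lemma ev_one: "ev 1 y z = 1" by (simp add: ev_def)
lemma ev_0[simp]: "ev 0 y z = 0" by (simp add: ev_def)
lemma ev_pcompose: "ev (pcompose p q) y z = ev p (ev q y z) z"
  by (induction p) (simp_all add: pcompose_pCons ev_add ev_mult ev_const ev_pCons)
lemma ev_Mp: "ev (Mp p) y z = ev p (1 - y - z) z"
  by (simp add: Mp_def ev_pcompose Qm_def ev_diff ev_one ev_X1 ev_X2)

lemma X1_mult: "X1 * p = pCons 0 p" by (simp add: X1_def)
lemma D2_X1_pow[simp]: "D2 (X1^n) = 0"
  by (induction n) (simp_all add: D2_mult)
lemma Gam_X1: "Gam X1 q = X1*(1-X1)*pderiv q - X1*X2*D2 q"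
  unfolding Gam_def by simp
lemma Lop_X1: "Lop X1 = 1 - 3*X1"
  unfolding Lop_def by simp
lemma Lop_X1_mult: "Lop (X1 * q) = X1*(Lop q + 2*(1-X1)*pderiv q - 2*X2*D2 q - 3*q) + q"
  unfolding Lop_mult Lop_X1 Gam_X1 by (simp add: algebra_simps)

lemma Lop_X1_pow: "\<exists>R. Lop (X1^(Suc j) * q) = X1^(Suc j) * R + of_nat ((Suc j)^2) * X1^j * q"
proof (induction j)
  case 0
  show ?case using Lop_X1_mult[of q] by (intro exI[of _ "Lop q + 2*(1-X1)*pderiv q - 2*X2*D2 q - 3*q"]) simp
next
  case (Suc j)
  then obtain R where R: "Lop (X1^(Suc j) * q) = X1^(Suc j) * R + of_nat ((Suc j)^2) * X1^j * q" by blast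
  have "pderiv (X1^(Suc j)) = smult (of_nat (Suc j)) (X1^j)"
    by (simp only: pderiv_power_Suc pderiv_X1 mult_1_right)
  also have "\<dots> = of_nat (Suc j) * X1^j" by (simp add: of_nat_poly)
  finally have d0: "pderiv (X1^(Suc j)) = of_nat (Suc j) * X1^j" .
  have d1: "pderiv (X1^(Suc j) * q) = X1^(Suc j) * pderiv q + of_nat (Suc j) * X1^j * q"
    by (simp only: pderiv_mult d0) (simp add: algebra_simps)
  have d2: "D2 (X1^(Suc j) * q) = X1^(Suc j) * D2 q"
    by (simp add: D2_mult)
  have "Lop (X1^(Suc (Suc j)) * q) = Lop (X1 * (X1^(Suc j) * q))" by (simp add: mult.assoc)
  also have "\<dots> = X1^(Suc (Suc j)) * (R + 2*(1-X1)*pderiv q - 2*X2*D2 q - 3*q - 2*of_nat (Suc j)*q)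
       + of_nat ((Suc (Suc j))^2) * X1^(Suc j) * q"
    unfolding Lop_X1_mult R d1 d2 by (simp add: algebra_simps power2_eq_square)
  finally show ?case by blast
qed

lemma eq_X1_mult: "coeff p 0 = 0 \<Longrightarrow> \<exists>q. p = X1 * q"
  by (cases p) (auto simp: X1_mult)

lemma eig_zero:
  assumes L: "Lop p = [:[:c:]:] * p" and p0: "coeff p 0 = 0"
  shows "p = 0"
proof -
  have "\<exists>q. p = X1^(Suc j) * q" for j
  proof (induction j)
    case 0
    show ?case using eq_X1_mult[OF p0] by simp
  next
    case (Suc j)
    then obtain q where q: "p = X1^(Suc j) * q" by blast
    obtain R where R: "Lop (X1^(Suc j) * q) = X1^(Suc j) * R + of_nat ((Suc j)^2) * X1^j * q"
      using Lop_X1_pow by blast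
    have "X1^j * (X1*(R - [:[:c:]:]*q) + of_nat ((Suc j)^2) * q) = 0"
      using L unfolding q R by (simp add: algebra_simps)
    moreover have "X1^j \<noteq> 0" by (simp add: X1_def)
    ultimately have e: "X1*(R - [:[:c:]:]*q) + of_nat ((Suc j)^2) * q = 0"
      by (simp only: mult_eq_0_iff) simp
    have "coeff (X1*(R - [:[:c:]:]*q) + of_nat ((Suc j)^2) * q) 0 = of_nat ((Suc j)^2) * coeff q 0"
      by (simp add: X1_mult of_nat_poly)
    with e have "of_nat ((Suc j)^2) * coeff q 0 = 0" by simp
    moreover have "(of_nat ((Suc j)^2) :: real poly) \<noteq> 0" by (simp add: of_nat_poly del: of_nat_Suc)
    ultimately have "coeff q 0 = 0" by simp
    then obtain q' where "q = X1 * q'" using eq_X1_mult by blast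
    then show ?case using q by (intro exI[of _ q']) (simp add: mult_ac)
  qed
  then obtain q where q: "p = X1^(Suc (degree p)) * q" by blast
  show ?thesis
  proof (rule ccontr)
    assume "p \<noteq> 0"
    then have "q \<noteq> 0" using q by auto
    then have "degree p = Suc (degree p) + degree q"
      by (subst q) (simp add: degree_mult_eq X1_def degree_power_eq)
    then show False by simp
  qed
qed



definition Wv :: "real poly" where "Wv = [:-1,1:]"
definition Sv :: "real poly" where "Sv = [:0,1:]"

definition Top :: "nat \<Rightarrow> real poly \<Rightarrow> real poly" where
  "Top \<beta> f = (Sv - Sv*Sv) * pderiv (pderiv f) + ([:of_nat \<beta> + 1:] - [:of_nat \<beta> + 2:] * Sv) * pderiv f"

lemma pderiv_Wv[simp]: "pderiv Wv = 1" by (simp add: Wv_def pderiv_pCons)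
lemma pderiv_Sv[simp]: "pderiv Sv = 1" by (simp add: Sv_def pderiv_pCons)
lemma Sv_Wv: "Sv = Wv + 1" by (simp add: Sv_def Wv_def one_pCons)

lemma Top_alt: "Top \<beta> f = - Sv*Wv* pderiv (pderiv f) - ((of_nat \<beta> + 1) * Wv + Sv) * pderiv f"
proof -
  have 1: "Sv - Sv*Sv = - Sv*Wv" by (simp add: Sv_Wv algebra_simps)
  have 2: "[:of_nat \<beta> + 1:] - [:of_nat \<beta> + 2:] * Sv = - ((of_nat \<beta> + 1) * Wv + Sv)"
    by (simp add: Sv_def Wv_def of_nat_poly algebra_simps)
  show ?thesis unfolding Top_def 1 2 by (simp add: algebra_simps)
qed

lemma pd_pow: "pderiv (p ^ n) = of_nat n * p ^ (n - 1) * pderiv p"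
  by (simp only: pderiv_power) (simp add: of_nat_poly)

lemma pd_pow_Suc: "pderiv (p ^ Suc n) = of_nat (Suc n) * p ^ n * pderiv p"
  by (simp only: pderiv_power_Suc) (simp add: of_nat_poly)

lemma Top_phi:
  "Top \<beta> (Wv^r * Sv^q) = - of_nat (r*r) * Wv^(r-1) * Sv^(q+1)
      - of_nat q * (of_nat q + of_nat \<beta>) * Wv^(r+1) * Sv^(q-1)
      - of_nat (2*r*q + (\<beta>+1)*r + q) * Wv^r * Sv^q"
proof -
  consider "r = 0" | "r = Suc 0" | r' where "r = Suc (Suc r')" by (metis One_nat_def not0_implies_Suc)
  then show ?thesis
  proof cases
    case 1
    consider "q = 0" | "q = Suc 0" | q' where "q = Suc (Suc q')" by (metis One_nat_def not0_implies_Suc)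
    then show ?thesis using 1
      by cases (simp_all add: Top_alt pderiv_mult pderiv_add pderiv_diff pderiv_minus pd_pow_Suc algebra_simps del: power_Suc, simp_all add: algebra_simps)
  next
    case 2
    consider "q = 0" | "q = Suc 0" | q' where "q = Suc (Suc q')" by (metis One_nat_def not0_implies_Suc)
    then show ?thesis using 2
      by cases (simp_all add: Top_alt pderiv_mult pderiv_add pderiv_diff pderiv_minus pd_pow_Suc algebra_simps del: power_Suc, simp_all add: algebra_simps)
  next
    case 3
    consider "q = 0" | "q = Suc 0" | q' where "q = Suc (Suc q')" by (metis One_nat_def not0_implies_Suc)
    then show ?thesis using 3
      by cases (simp_all add: Top_alt pderiv_mult pderiv_add pderiv_diff pderiv_minus pd_pow_Suc algebra_simps del: power_Suc, simp_all add: algebra_simps)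
  qed
qed

lemma of_nat_mult_poly: "(of_nat n :: real poly) * p = smult (of_nat n) p"
  by (simp add: of_nat_poly)

lemma Top_add: "Top b (f + g) = Top b f + Top b g"
  by (simp add: Top_def pderiv_add algebra_simps smult_add_right)
lemma Top_smult: "Top b (smult c f) = smult c (Top b f)"
  by (simp add: Top_def pderiv_smult smult_add_right smult_diff_right mult_smult_right)
lemma Top_0[simp]: "Top b 0 = 0" by (simp add: Top_def)
lemma Top_sum: "Top b (sum f A) = sum (\<lambda>i. Top b (f i)) A"
  by (induction A rule: infinite_finite_induct) (auto simp: Top_add)

lemma Top_phi':
  "Top \<beta> (Wv^r * Sv^q) = - smult (of_nat (r*r)) (Wv^(r-1) * Sv^(q+1))
      - smult (of_nat q * (of_nat q + of_nat \<beta>)) (Wv^(r+1) * Sv^(q-1))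
      - smult (of_nat (2*r*q + (\<beta>+1)*r + q)) (Wv^r * Sv^q)"
  unfolding Top_phi by (simp add: of_nat_poly algebra_simps)

lemma binom_step: "(n choose Suc r) * Suc r = (n choose r) * (n - r)"
proof (cases n)
  case 0 then show ?thesis by simp
next
  case (Suc n')
  have "Suc r * (Suc n' choose Suc r) = Suc n' * (n' choose r)" by (rule Suc_times_binomial)
  also have "\<dots> = (Suc n' - r) * (Suc n' choose r)" using binomial_absorb_comp[of "Suc n'" r] by simp
  finally show ?thesis using Suc by (simp add: mult.commute)
qed

lemma smult_sum_right: "smult c (sum f A) = (\<Sum>i\<in>A. smult c (f i))"
  by (induction A rule: infinite_finite_induct) (auto simp: smult_add_right)

definition acf :: "nat \<Rightarrow> nat \<Rightarrow> nat \<Rightarrow> real" where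
  "acf \<beta> m r = real (m choose r) * real ((m + \<beta>) choose r)"

lemma acf_step: "acf \<beta> m (Suc r) * (of_nat (Suc r) * of_nat (Suc r)) = acf \<beta> m r * (of_nat (m - r) * (of_nat (m - r) + of_nat \<beta>))"
proof (cases "r < m")
  case True
  have 1: "real (m choose Suc r) * of_nat (Suc r) = real (m choose r) * of_nat (m - r)"
    using binom_step[of m r] by (metis of_nat_mult)
  have "real ((m+\<beta>) choose Suc r) * of_nat (Suc r) = real ((m+\<beta>) choose r) * of_nat (m + \<beta> - r)"
    using binom_step[of "m+\<beta>" r] by (metis of_nat_mult)
  moreover have "(of_nat (m + \<beta> - r) :: real) = of_nat (m - r) + of_nat \<beta>"
    using True by (simp add: of_nat_diff)
  ultimately have 2: "real ((m+\<beta>) choose Suc r) * of_nat (Suc r) = real ((m+\<beta>) choose r) * (of_nat (m - r) + of_nat \<beta>)"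
    by simp
  show ?thesis unfolding acf_def using 1 2
    by (metis (no_types, lifting) mult.assoc mult.left_commute)
next
  case False
  then show ?thesis by (simp add: acf_def)
qed

definition Fpol :: "nat \<Rightarrow> nat \<Rightarrow> real poly" where
  "Fpol \<beta> m = (\<Sum>r\<le>m. smult (acf \<beta> m r) (Wv^r * Sv^(m-r)))"

lemma lin4: "- ((A::real)*X) - A*Y - A*Z + A*W = A * (- Y - X - Z + W)"
  by (simp add: algebra_simps)

lemma Fpol_ode: "Top \<beta> (Fpol \<beta> m) + smult (of_nat (m*(m+\<beta>+1))) (Fpol \<beta> m) = 0"
proof -
  define ph where "ph r q = Wv^r * Sv^q" for r q
  have s1: "(\<Sum>r\<le>m. smult (acf \<beta> m r * of_nat (r*r)) (ph (r-1) (m-r+1)))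
          = (\<Sum>r\<le>m. smult (acf \<beta> m r * (of_nat (m - r) * (of_nat (m - r) + of_nat \<beta>))) (ph r (m-r)))"
  proof (cases m)
    case 0 then show ?thesis by simp
  next
    case (Suc m')
    have "(\<Sum>r\<le>m. smult (acf \<beta> m r * of_nat (r*r)) (ph (r-1) (m-r+1)))
      = (\<Sum>r\<le>m'. smult (acf \<beta> m (Suc r) * of_nat (Suc r * Suc r)) (ph r (m-r)))"
      unfolding Suc sum.atMost_Suc_shift by (auto intro!: sum.cong simp: Suc_diff_le)
    also have "\<dots> = (\<Sum>r\<le>m'. smult (acf \<beta> m r * (of_nat (m - r) * (of_nat (m - r) + of_nat \<beta>))) (ph r (m-r)))"
      by (intro sum.cong refl) (metis acf_step of_nat_mult)
    also have "\<dots> = (\<Sum>r\<le>m. smult (acf \<beta> m r * (of_nat (m - r) * (of_nat (m - r) + of_nat \<beta>))) (ph r (m-r)))"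
      unfolding Suc sum.atMost_Suc by simp
    finally show ?thesis .
  qed
  have s2: "(\<Sum>r\<le>m. smult (acf \<beta> m r * (of_nat (m - r) * (of_nat (m - r) + of_nat \<beta>))) (ph (r+1) (m-r-1)))
          = (\<Sum>r\<le>m. smult (acf \<beta> m r * of_nat (r*r)) (ph r (m-r)))"
  proof (cases m)
    case 0 then show ?thesis by simp
  next
    case (Suc m')
    have "(\<Sum>r\<le>m. smult (acf \<beta> m r * (of_nat (m - r) * (of_nat (m - r) + of_nat \<beta>))) (ph (r+1) (m-r-1)))
      = (\<Sum>r\<le>m'. smult (acf \<beta> m r * (of_nat (m - r) * (of_nat (m - r) + of_nat \<beta>))) (ph (Suc r) (m-Suc r)))"
      unfolding Suc sum.atMost_Suc by simp
    also have "\<dots> = (\<Sum>r\<le>m'. smult (acf \<beta> m (Suc r) * of_nat (Suc r * Suc r)) (ph (Suc r) (m - Suc r)))"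
      by (intro sum.cong refl) (metis acf_step of_nat_mult)
    also have "\<dots> = (\<Sum>r\<le>m. smult (acf \<beta> m r * of_nat (r*r)) (ph r (m-r)))"
      unfolding Suc sum.atMost_Suc_shift by simp
    finally show ?thesis .
  qed
  have br: "acf \<beta> m r * (- of_nat (r*r) - (of_nat (m - r) * (of_nat (m - r) + of_nat \<beta>))
            - of_nat (2*r*(m-r) + (\<beta>+1)*r + (m-r)) + of_nat (m*(m+\<beta>+1))) = 0" if "r \<le> m" for r
  proof -
    obtain d where d: "m = r + d" using \<open>r \<le> m\<close> le_Suc_ex by blast
    show ?thesis unfolding d by (simp add: algebra_simps)
  qed
  define A where "A = (\<Sum>r\<le>m. smult (acf \<beta> m r * of_nat (r*r)) (ph (r-1) (m-r+1)))"
  define B where "B = (\<Sum>r\<le>m. smult (acf \<beta> m r * (of_nat (m - r) * (of_nat (m - r) + of_nat \<beta>))) (ph (r+1) (m-r-1)))"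
  define C where "C = (\<Sum>r\<le>m. smult (acf \<beta> m r * of_nat (2*r*(m-r) + (\<beta>+1)*r + (m-r))) (ph r (m-r)))"
  have T: "Top \<beta> (Fpol \<beta> m) = - A - B - C"
  proof -
    have "Top \<beta> (Fpol \<beta> m) = (\<Sum>r\<le>m. - smult (acf \<beta> m r * of_nat (r*r)) (ph (r-1) (m-r+1))
        - smult (acf \<beta> m r * (of_nat (m - r) * (of_nat (m - r) + of_nat \<beta>))) (ph (r+1) (m-r-1))
        - smult (acf \<beta> m r * of_nat (2*r*(m-r) + (\<beta>+1)*r + (m-r))) (ph r (m-r)))"
      unfolding Fpol_def Top_sum Top_smult
    proof (intro sum.cong refl)
      fix r assume "r \<in> {..m}"
      then have "m - r + 1 = m - r + 1" "m - r - 1 = m - r - 1" by auto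
      show "smult (acf \<beta> m r) (Top \<beta> (Wv ^ r * Sv ^ (m - r))) = - smult (acf \<beta> m r * of_nat (r*r)) (ph (r-1) (m-r+1))
        - smult (acf \<beta> m r * (of_nat (m - r) * (of_nat (m - r) + of_nat \<beta>))) (ph (r+1) (m-r-1))
        - smult (acf \<beta> m r * of_nat (2*r*(m-r) + (\<beta>+1)*r + (m-r))) (ph r (m-r))"
        unfolding Top_phi' ph_def by (simp only: smult_diff_right smult_minus_right smult_smult)
    qed
    also have "\<dots> = - A - B - C"
      unfolding A_def B_def C_def by (simp only: sum_subtractf sum_negf)
    finally show ?thesis .
  qed
  have "Top \<beta> (Fpol \<beta> m) + smult (of_nat (m*(m+\<beta>+1))) (Fpol \<beta> m)
     = (\<Sum>r\<le>m. smult (acf \<beta> m r * (- of_nat (r*r) - (of_nat (m - r) * (of_nat (m - r) + of_nat \<beta>))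
            - of_nat (2*r*(m-r) + (\<beta>+1)*r + (m-r)) + of_nat (m*(m+\<beta>+1)))) (ph r (m-r)))"
  proof -
    have F: "smult (of_nat (m*(m+\<beta>+1))) (Fpol \<beta> m) = (\<Sum>r\<le>m. smult (acf \<beta> m r * of_nat (m*(m+\<beta>+1))) (ph r (m-r)))"
      unfolding Fpol_def ph_def smult_sum_right by (simp add: smult_smult mult.commute)
    have "- A - B - C + smult (of_nat (m*(m+\<beta>+1))) (Fpol \<beta> m) =
       (\<Sum>r\<le>m. - smult (acf \<beta> m r * (of_nat (m - r) * (of_nat (m - r) + of_nat \<beta>))) (ph r (m-r))
          - smult (acf \<beta> m r * of_nat (r*r)) (ph r (m-r))
          - smult (acf \<beta> m r * of_nat (2*r*(m-r) + (\<beta>+1)*r + (m-r))) (ph r (m-r))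
          + smult (acf \<beta> m r * of_nat (m*(m+\<beta>+1))) (ph r (m-r)))"
      unfolding A_def B_def s1 s2 C_def F by (simp only: sum_subtractf sum_negf sum.distrib)
    also have "\<dots> = (\<Sum>r\<le>m. smult (acf \<beta> m r * (- of_nat (r*r) - (of_nat (m - r) * (of_nat (m - r) + of_nat \<beta>))
            - of_nat (2*r*(m-r) + (\<beta>+1)*r + (m-r)) + of_nat (m*(m+\<beta>+1)))) (ph r (m-r)))"
    proof (intro sum.cong refl)
      fix r
      let ?P = "ph r (m-r)"
      show "- smult (acf \<beta> m r * (of_nat (m - r) * (of_nat (m - r) + of_nat \<beta>))) ?P
          - smult (acf \<beta> m r * of_nat (r*r)) ?P
          - smult (acf \<beta> m r * of_nat (2*r*(m-r) + (\<beta>+1)*r + (m-r))) ?P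
          + smult (acf \<beta> m r * of_nat (m*(m+\<beta>+1))) ?P
          = smult (acf \<beta> m r * (- of_nat (r*r) - (of_nat (m - r) * (of_nat (m - r) + of_nat \<beta>))
            - of_nat (2*r*(m-r) + (\<beta>+1)*r + (m-r)) + of_nat (m*(m+\<beta>+1)))) ?P"
        unfolding smult_minus_left[symmetric] smult_diff_left[symmetric] smult_add_left[symmetric]
        by (rule arg_cong[where f="\<lambda>x. smult x ?P"]) (rule lin4)
    qed
    finally show ?thesis unfolding T .
  qed
  also have "\<dots> = 0"
  proof (intro sum.neutral ballI)
    fix r assume "r \<in> {..m}"
    then show "smult (acf \<beta> m r * (- of_nat (r*r) - (of_nat (m - r) * (of_nat (m - r) + of_nat \<beta>))
            - of_nat (2*r*(m-r) + (\<beta>+1)*r + (m-r)) + of_nat (m*(m+\<beta>+1)))) (ph r (m-r)) = 0"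
      using br[of r] by simp
  qed
  finally show ?thesis .
qed



definition cst :: "real \<Rightarrow> pp" where "cst c = [:[:c:]:]"
definition Sx :: pp where "Sx = X1 + X2"
definition lift :: "real poly \<Rightarrow> pp" where "lift F = map_poly (\<lambda>c. [:c:]) F"
definition Fl :: "real poly \<Rightarrow> pp" where "Fl F = pcompose (lift F) Sx"

lemma cst_add: "cst (a + b) = cst a + cst b" by (simp add: cst_def)
lemma cst_diff: "cst (a - b) = cst a - cst b" by (simp add: cst_def)
lemma cst_minus: "cst (- a) = - cst a" by (simp add: cst_def)
lemma cst_mult: "cst (a * b) = cst a * cst b" by (simp add: cst_def)
lemma cst_0[simp]: "cst 0 = 0" by (simp add: cst_def)
lemma cst_1[simp]: "cst 1 = 1" by (simp add: cst_def one_pCons)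
lemma cst_of_nat: "cst (of_nat n) = of_nat n" by (simp add: cst_def of_nat_poly)
lemma cst_numeral: "cst (numeral n) = numeral n" by (simp add: cst_def numeral_poly)
lemma pderiv_cst[simp]: "pderiv (cst c) = 0" by (simp add: cst_def)
lemma D2_cst[simp]: "D2 (cst c) = 0" by (simp add: cst_def)
lemma cst_smult: "cst c * p = smult [:c:] p" by (simp add: cst_def)
lemma ev_cst: "ev (cst c) y z = c" by (simp add: cst_def ev_def)

lemma lift_pCons: "lift (pCons a F) = pCons [:a:] (lift F)"
  by (simp add: lift_def map_poly_pCons)
lemma lift_0[simp]: "lift 0 = 0" by (simp add: lift_def)
lemma lift_add: "lift (F + G) = lift F + lift G"
  by (rule poly_eqI) (simp add: lift_def coeff_map_poly)
lemma Fl_pCons: "Fl (pCons a F) = cst a + Sx * Fl F"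
  by (simp add: Fl_def lift_pCons pcompose_pCons cst_def)
lemma Fl_0[simp]: "Fl 0 = 0" by (simp add: Fl_def)
lemma Fl_add: "Fl (F + G) = Fl F + Fl G" by (simp add: Fl_def lift_add pcompose_add)
lemma Fl_smult: "Fl (smult c F) = cst c * Fl F"
  by (induction F) (simp_all add: Fl_pCons cst_mult algebra_simps)
lemma Fl_mult: "Fl (F * G) = Fl F * Fl G"
  by (induction F) (simp_all add: Fl_pCons Fl_add Fl_smult algebra_simps)
lemma Fl_const: "Fl [:c:] = cst c" using Fl_pCons[of c 0] by simp
lemma Fl_one: "Fl 1 = 1" using Fl_const[of 1] by (simp add: one_pCons)
lemma Fl_minus: "Fl (- F) = - Fl F" using Fl_smult[of "-1" F] by (simp add: cst_minus)
lemma Fl_diff: "Fl (F - G) = Fl F - Fl G" using Fl_add[of F "-G"] by (simp add: Fl_minus)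
lemma Fl_Sv: "Fl Sv = Sx" by (simp add: Sv_def Fl_pCons Fl_const)
lemma Fl_of_nat: "Fl (of_nat n) = of_nat n" by (simp add: of_nat_poly Fl_const cst_of_nat)
lemma pderiv_lift: "pderiv (lift F) = lift (pderiv F)"
  by (induction F) (simp_all add: lift_pCons pderiv_pCons lift_add)
lemma D2_lift: "D2 (lift F) = 0"
  by (rule poly_eqI) (simp add: coeff_D2 lift_def coeff_map_poly)
lemma pderiv_Sx: "pderiv Sx = 1" by (simp add: Sx_def pderiv_add)
lemma D2_Sx: "D2 Sx = 1" by (simp add: Sx_def D2_add)
lemma pderiv_Fl: "pderiv (Fl F) = Fl (pderiv F)"
  by (simp add: Fl_def pderiv_pcompose pderiv_lift pderiv_Sx)
lemma D2_Fl: "D2 (Fl F) = Fl (pderiv F)"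
  by (simp add: Fl_def D2_pcompose D2_lift pderiv_lift D2_Sx)
lemma ev_lift: "ev (lift F) y z = poly F y"
  by (induction F) (simp_all add: lift_pCons ev_pCons)
lemma ev_Fl: "ev (Fl F) y z = poly F (y + z)"
  by (simp add: Fl_def ev_pcompose ev_lift Sx_def ev_add ev_X1 ev_X2)

lemma Lop_Fl: "Lop (Fl F) = (Sx - Sx*Sx) * Fl (pderiv (pderiv F)) + (2 - 3*Sx) * Fl (pderiv F)"
  unfolding Lop_def by (simp add: pderiv_Fl D2_Fl Sx_def algebra_simps)

lemma Fl_Top: "Fl (Top b F) = (Sx - Sx*Sx) * Fl (pderiv (pderiv F)) + (cst (of_nat b + 1) - cst (of_nat b + 2) * Sx) * Fl (pderiv F)"
  unfolding Top_def by (simp add: Fl_add Fl_diff Fl_mult Fl_Sv Fl_const Fl_smult)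

definition Eop :: "pp \<Rightarrow> pp" where "Eop p = X1 * pderiv p + X2 * D2 p"
definition Aop :: "pp \<Rightarrow> pp" where "Aop p = pderiv (X1 * pderiv p) + D2 (X2 * D2 p)"

lemma Lop_AE: "Lop p = Aop p - Eop (Eop p) - 2 * Eop p"
  unfolding Lop_def Aop_def Eop_def
  by (simp add: pderiv_mult D2_mult pderiv_add D2_add D1_D2 algebra_simps)

lemma Eop_add: "Eop (p + q) = Eop p + Eop q" by (simp add: Eop_def pderiv_add D2_add algebra_simps)
lemma Aop_add: "Aop (p + q) = Aop p + Aop q" by (simp add: Aop_def pderiv_add D2_add algebra_simps)
lemma Eop_0[simp]: "Eop 0 = 0" by (simp add: Eop_def)
lemma Aop_0[simp]: "Aop 0 = 0" by (simp add: Aop_def)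
lemma Eop_sum: "Eop (sum f A) = (\<Sum>i\<in>A. Eop (f i))"
  by (induction A rule: infinite_finite_induct) (auto simp: Eop_add)
lemma Aop_sum: "Aop (sum f A) = (\<Sum>i\<in>A. Aop (f i))"
  by (induction A rule: infinite_finite_induct) (auto simp: Aop_add)
lemma Eop_cst: "Eop (cst c * p) = cst c * Eop p" by (simp add: Eop_def pderiv_mult D2_mult algebra_simps)
lemma Aop_cst: "Aop (cst c * p) = cst c * Aop p" by (simp add: Aop_def pderiv_mult D2_mult algebra_simps)
lemma Eop_of_nat: "Eop (of_nat n * p) = of_nat n * Eop p"
  using Eop_cst[of "of_nat n" p] by (simp add: cst_of_nat)

lemma D2_pow_Suc: "D2 (p ^ Suc n) = of_nat (Suc n) * p ^ n * D2 p"
  by (induction n) (simp_all add: D2_mult algebra_simps)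
lemma pderiv_pow_Suc': "pderiv (p ^ Suc n) = of_nat (Suc n) * p ^ n * pderiv p"
  by (simp only: pderiv_power_Suc) (simp add: of_nat_poly)
lemma pderiv_X2_pow[simp]: "pderiv (X2 ^ b) = 0"
  by (induction b) (simp_all add: pderiv_mult)

lemma pd_mon: "pderiv (X1^a * X2^b) = of_nat a * (X1^(a-1) * X2^b)"
  by (cases a) (simp_all add: pderiv_mult pderiv_pow_Suc' algebra_simps del: power_Suc)
lemma d2_mon: "D2 (X1^a * X2^b) = of_nat b * (X1^a * X2^(b-1))"
  by (cases b) (simp_all add: D2_mult D2_pow_Suc algebra_simps del: power_Suc)
lemma X1_pd_mon: "X1 * pderiv (X1^a * X2^b) = of_nat a * (X1^a * X2^b)"
  unfolding pd_mon by (cases a) (simp_all add: algebra_simps)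
lemma X2_d2_mon: "X2 * D2 (X1^a * X2^b) = of_nat b * (X1^a * X2^b)"
  unfolding d2_mon by (cases b) (simp_all add: algebra_simps)
lemma E_mon: "Eop (X1^a * X2^b) = of_nat (a+b) * (X1^a * X2^b)"
  unfolding Eop_def X1_pd_mon X2_d2_mon by (simp add: algebra_simps)
lemma pderiv_of_nat_mult: "pderiv (of_nat n * p) = of_nat n * pderiv (p::pp)"
  by (simp add: pderiv_mult)
lemma D2_of_nat_mult: "D2 (of_nat n * p) = of_nat n * D2 p"
  using Eop_cst by (metis (no_types, lifting) D2_cst D2_mult add_0 cst_of_nat mult_zero_left)
lemma A_mon: "Aop (X1^a * X2^b) = of_nat (a*a) * (X1^(a-1) * X2^b) + of_nat (b*b) * (X1^a * X2^(b-1))"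
  unfolding Aop_def X1_pd_mon X2_d2_mon unfolding pderiv_of_nat_mult D2_of_nat_mult pd_mon d2_mon by (simp add: algebra_simps)

definition hc :: "nat \<Rightarrow> nat \<Rightarrow> real" where
  "hc k s = real (k choose (k - s)) * real (k choose s) * (-1)^s"
definition Hp :: "nat \<Rightarrow> pp" where
  "Hp k = (\<Sum>s\<le>k. cst (hc k s) * (X1^(k-s) * X2^s))"

lemma E_H: "Eop (Hp k) = of_nat k * Hp k"
  unfolding Hp_def Eop_sum Eop_cst E_mon sum_distrib_left
  by (intro sum.cong refl) (simp add: algebra_simps)

lemma hc_step: "s < k \<Longrightarrow> hc k s * (of_nat (k-s) * of_nat (k-s)) + hc k (Suc s) * (of_nat (Suc s) * of_nat (Suc s)) = 0"
proof -
  assume s: "s < k"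
  have b: "real (k choose Suc s) * of_nat (Suc s) = real (k choose s) * of_nat (k - s)"
    using binom_step[of k s] by (metis of_nat_mult)
  have "hc k (Suc s) * (of_nat (Suc s) * of_nat (Suc s)) = - ((real (k choose Suc s) * of_nat (Suc s)) * (real (k choose Suc s) * of_nat (Suc s))) * (-1)^s"
    unfolding hc_def using s by (simp add: binomial_symmetric[symmetric] algebra_simps)
  also have "\<dots> = - ((real (k choose s) * of_nat (k - s)) * (real (k choose s) * of_nat (k - s))) * (-1)^s" by (simp only: b)
  also have "\<dots> = - hc k s * (of_nat (k-s) * of_nat (k-s))"
    unfolding hc_def using s by (simp add: binomial_symmetric[symmetric] algebra_simps)
  finally show ?thesis by simp
qed

lemma A_H: "Aop (Hp k) = 0"
proof (cases k)
  case 0 then show ?thesis by (simp add: Hp_def Aop_def)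
next
  case (Suc k')
  have "Aop (Hp k) = (\<Sum>s\<le>k. cst (hc k s * of_nat ((k-s)*(k-s))) * (X1^(k-s-1) * X2^s))
                   + (\<Sum>s\<le>k. cst (hc k s * of_nat (s*s)) * (X1^(k-s) * X2^(s-1)))"
    unfolding Hp_def Aop_sum Aop_cst A_mon sum.distrib[symmetric]
    by (intro sum.cong refl) (simp add: cst_mult cst_of_nat algebra_simps)
  also have "\<dots> = (\<Sum>s\<le>k'. cst (hc k s * of_nat ((k-s)*(k-s))) * (X1^(k'-s) * X2^s))
                   + (\<Sum>s\<le>k'. cst (hc k (Suc s) * of_nat (Suc s * Suc s)) * (X1^(k'-s) * X2^s))"
  proof -
    have 1: "(\<Sum>s\<le>k. cst (hc k s * of_nat ((k-s)*(k-s))) * (X1^(k-s-1) * X2^s))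
       = (\<Sum>s\<le>k'. cst (hc k s * of_nat ((k-s)*(k-s))) * (X1^(k'-s) * X2^s))"
      unfolding Suc sum.atMost_Suc by simp
    have 2: "(\<Sum>s\<le>k. cst (hc k s * of_nat (s*s)) * (X1^(k-s) * X2^(s-1)))
       = (\<Sum>s\<le>k'. cst (hc k (Suc s) * of_nat (Suc s * Suc s)) * (X1^(k'-s) * X2^s))"
      unfolding Suc sum.atMost_Suc_shift by simp
    show ?thesis unfolding 1 2 ..
  qed
  also have "\<dots> = (\<Sum>s\<le>k'. cst (hc k s * (of_nat (k-s) * of_nat (k-s)) + hc k (Suc s) * (of_nat (Suc s) * of_nat (Suc s))) * (X1^(k'-s) * X2^s))"
    unfolding sum.distrib[symmetric] by (intro sum.cong refl) (simp only: of_nat_mult cst_add distrib_right)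
  also have "\<dots> = 0"
  proof (intro sum.neutral ballI)
    fix s assume "s \<in> {..k'}"
    then have "s < k" using Suc by auto
    from hc_step[OF this] show "cst (hc k s * (of_nat (k-s) * of_nat (k-s)) + hc k (Suc s) * (of_nat (Suc s) * of_nat (Suc s))) * (X1^(k'-s) * X2^s) = 0"
      by (simp only: cst_0 mult_zero_left)
  qed
  finally show ?thesis .
qed

lemma Lop_H: "Lop (Hp k) = - of_nat (k*k + 2*k) * Hp k"
  unfolding Lop_AE A_H E_H Eop_of_nat by (simp add: algebra_simps)

lemma Gam_Fl: "Gam (Fl F) h = Fl (pderiv F) * (1 - Sx) * Eop h"
  unfolding Gam_def Eop_def pderiv_Fl D2_Fl Sx_def by (simp add: algebra_simps)

definition Bp :: "nat \<Rightarrow> nat \<Rightarrow> pp" where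
  "Bp n k = Fl (Fpol (2*k+1) (n-k)) * Hp k"

lemma Lop_Bp:
  assumes "k \<le> n"
  shows "Lop (Bp n k) = - of_nat (n*n + 2*n) * Bp n k"
proof -
  define m where "m = n - k"
  have n: "n = m + k" using assms m_def by simp
  define F where "F = Fpol (2*k+1) m"
  define P where "P = Fl F"
  define P1 where "P1 = Fl (pderiv F)"
  define P2 where "P2 = Fl (pderiv (pderiv F))"
  have "Fl (Top (2*k+1) F + smult (of_nat (m*(m+(2*k+1)+1))) F) = 0"
    unfolding F_def using Fpol_ode[of "2*k+1" m] by (simp only: Fl_0)
  then have ode: "(Sx - Sx*Sx) * P2 + ((of_nat k * 2 + 2) - (of_nat k * 2 + 3) * Sx) * P1
     + (of_nat m * (of_nat m + of_nat k * 2 + 2)) * P = 0"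
    unfolding Fl_add Fl_Top Fl_smult P_def P1_def P2_def
    by (simp add: cst_add cst_mult cst_of_nat cst_numeral algebra_simps)
  have "Lop (Bp n k) - (- of_nat (n*n + 2*n) * Bp n k)
     = Hp k * ((Sx - Sx*Sx) * P2 + ((of_nat k * 2 + 2) - (of_nat k * 2 + 3) * Sx) * P1
     + (of_nat m * (of_nat m + of_nat k * 2 + 2)) * P)"
    unfolding Bp_def m_def[symmetric] P_def P1_def P2_def F_def Lop_mult Lop_H Gam_Fl E_H
      Lop_Fl n
    by (simp add: algebra_simps)
  then show ?thesis unfolding ode by simp
qed



lemma ev_Hp: "ev (Hp k) y z = jacobi_hom 0 0 k (y - z) (y + z)"
proof -
  have a: "(y - z - (y + z)) / 2 = - z" "(y - z + (y + z)) / 2 = y" by simp_all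
  show ?thesis
    unfolding Hp_def ev_sum jacobi_hom_def a
  proof (intro sum.cong refl)
    fix s
    show "ev (cst (hc k s) * (X1 ^ (k - s) * X2 ^ s)) y z =
         real ((k + 0) choose (k - s)) * real ((k + 0) choose s) * (- z) ^ s * y ^ (k - s)"
      unfolding ev_mult ev_cst ev_power ev_X1 ev_X2 hc_def power_minus[of z s] by simp
  qed
qed

lemma poly_Fpol: "poly (Fpol b m) t = jacobi 0 b m (2*t - 1)"
proof -
  have a: "(2*t - 1 - 1) / 2 = t - 1" "(2*t - 1 + 1) / 2 = t" by simp_all
  show ?thesis
    unfolding Fpol_def jacobi_def poly_sum a
  proof (intro sum.cong refl)
    fix r assume r: "r \<in> {..m}"
    have pw: "poly Wv t = t - 1" "poly Sv t = t" by (simp_all add: Wv_def Sv_def)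
    show "poly (smult (acf b m r) (Wv ^ r * Sv ^ (m - r))) t =
         real ((m + 0) choose (m - r)) * real ((m + b) choose r) * (t - 1) ^ r * t ^ (m - r)"
      unfolding poly_smult poly_mult poly_power pw acf_def using r
      by (simp add: binomial_symmetric[symmetric] mult.assoc)
  qed
qed

lemma ev_Bp: "ev (Bp n k) y z = bbasis n k (y, z)"
  unfolding Bp_def bbasis_def ev_mult ev_Fl ev_Hp poly_Fpol by simp

lemma poly_lift: "poly (lift F) q = pcompose F q"
  by (induction F) (simp_all add: lift_pCons pcompose_pCons)

lemma coeff0_Fl: "coeff (Fl F) 0 = F"
proof -
  have "poly Sx 0 = [:0,1:]" by (simp add: Sx_def X1_def X2_def poly_0_coeff_0)
  then show ?thesis
    by (simp add: poly_0_coeff_0[symmetric] Fl_def poly_pcompose poly_lift)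
qed

lemma coeff0_Hp: "coeff (Hp k) 0 = monom ((-1)^k) k"
proof -
  have "coeff (Hp k) 0 = (\<Sum>s\<le>k. (if s = k then monom ((-1)^k) k else 0))"
    unfolding Hp_def coeff_sum
  proof (intro sum.cong refl)
    fix s assume "s \<in> {..k}"
    then show "coeff (cst (hc k s) * (X1 ^ (k - s) * X2 ^ s)) 0 = (if s = k then monom ((-1)^k) k else 0)"
      by (auto simp: coeff_mult_0 coeff_0_power cst_def X1_def X2_def hc_def monom_altdef)
  qed
  also have "\<dots> = monom ((-1)^k) k" by simp
  finally show ?thesis .
qed

definition gr :: "nat \<Rightarrow> nat \<Rightarrow> real poly" where "gr n i = coeff (Bp n i) 0"

lemma gr_eq: "gr n i = monom ((-1)^i) i * Fpol (2*i+1) (n-i)"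
  unfolding gr_def Bp_def coeff_mult_0 coeff0_Fl coeff0_Hp by (simp add: mult.commute)

lemma degree_sum_bound: "(\<And>i. i \<in> A \<Longrightarrow> degree (f i) \<le> d) \<Longrightarrow> degree (sum f A) \<le> d"
  by (induction A rule: infinite_finite_induct) (auto intro: degree_add_le)

lemma degree_Fpol: "degree (Fpol b m) \<le> m"
  unfolding Fpol_def
proof (rule degree_sum_bound)
  fix r assume r: "r \<in> {..m}"
  have "degree (smult (acf b m r) (Wv ^ r * Sv ^ (m - r))) \<le> degree (Wv ^ r * Sv ^ (m - r))"
    by (rule degree_smult_le)
  also have "\<dots> \<le> degree (Wv ^ r) + degree (Sv ^ (m - r))" by (rule degree_mult_le)
  also have "\<dots> \<le> r + (m - r)"
    using degree_power_le[of Wv r] degree_power_le[of Sv "m-r"] by (simp add: Wv_def Sv_def)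
  finally show "degree (smult (acf b m r) (Wv ^ r * Sv ^ (m - r))) \<le> m" using r by simp
qed

lemma poly_Fpol_0: "poly (Fpol b m) 0 = acf b m m * (-1)^m"
proof -
  have "poly (Fpol b m) 0 = (\<Sum>r\<le>m. if r = m then acf b m m * (-1)^m else 0)"
    unfolding Fpol_def poly_sum
    by (intro sum.cong refl) (auto simp: Wv_def Sv_def poly_power)
  then show ?thesis by simp
qed

lemma acf_pos: "acf b m m > 0" by (simp add: acf_def)

lemma gr_props:
  assumes "i \<le> n"
  shows "\<forall>t<i. coeff (gr n i) t = 0" "coeff (gr n i) i \<noteq> 0" "degree (gr n i) \<le> n"
proof -
  show "\<forall>t<i. coeff (gr n i) t = 0" by (simp add: gr_eq coeff_monom_mult)
  show "coeff (gr n i) i \<noteq> 0"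
    using acf_pos[of "2*i+1" "n-i"] by (simp add: gr_eq coeff_monom_mult poly_0_coeff_0[symmetric] poly_Fpol_0)
  have "degree (gr n i) \<le> i + (n - i)"
    unfolding gr_eq using degree_mult_le[of "monom ((-1)^i) i" "Fpol (2*i+1) (n-i)"] degree_monom_le[of "(-1::real)^i" i]
      degree_Fpol[of "2*i+1" "n-i"] by linarith
  then show "degree (gr n i) \<le> n" using assms by simp
qed

lemma span_tri:
  fixes g :: "nat \<Rightarrow> real poly"
  assumes g0: "\<And>i t. i \<le> n \<Longrightarrow> t < i \<Longrightarrow> coeff (g i) t = 0"
      and g1: "\<And>i. i \<le> n \<Longrightarrow> coeff (g i) i \<noteq> 0"
      and g2: "\<And>i. i \<le> n \<Longrightarrow> degree (g i) \<le> n"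
      and p: "degree p \<le> n"
  shows "\<exists>c. p = (\<Sum>i\<le>n. smult (c i) (g i))"
proof -
  have main: "\<forall>p. degree p \<le> n \<longrightarrow> (\<forall>t<j. coeff p t = 0) \<longrightarrow> (\<exists>c. p = (\<Sum>i\<in>{j..n}. smult (c i) (g i)))"
    if "j \<le> Suc n" for j
    using that
  proof (induction j rule: inc_induct)
    case base
    show ?case
    proof (intro allI impI)
      fix p :: "real poly" assume "degree p \<le> n" "\<forall>t<Suc n. coeff p t = 0"
      then have "p = 0"
      proof (intro poly_eqI)
        fix t
        show "coeff p t = coeff 0 t"
        proof (cases "t \<le> n")
          case True then show ?thesis using \<open>\<forall>t<Suc n. coeff p t = 0\<close> by simp
        next
          case False then show ?thesis using \<open>degree p \<le> n\<close> by (simp add: coeff_eq_0)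
        qed
      qed
      then show "\<exists>c. p = (\<Sum>i\<in>{Suc n..n}. smult (c i) (g i))" by simp
    qed
  next
    case (step j)
    show ?case
    proof (intro allI impI)
      fix p :: "real poly" assume pd: "degree p \<le> n" and pc: "\<forall>t<j. coeff p t = 0"
      have jn: "j \<le> n" using step by simp
      define a where "a = coeff p j / coeff (g j) j"
      define p' where "p' = p - smult a (g j)"
      have "degree p' \<le> n" unfolding p'_def
      proof -
        have "degree (smult a (g j)) \<le> n" using g2[OF jn] degree_smult_le[of a "g j"] by linarith
        then show "degree (p - smult a (g j)) \<le> n"
          using pd by (intro degree_diff_le)
      qed
      moreover have "\<forall>t<Suc j. coeff p' t = 0"
      proof (intro allI impI)
        fix t assume "t < Suc j"
        then consider "t < j" | "t = j" by linarith
        then show "coeff p' t = 0"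
        proof cases
          case 1 then show ?thesis using pc g0[OF jn] by (simp add: p'_def)
        next
          case 2 then show ?thesis using g1[OF jn] by (simp add: p'_def a_def)
        qed
      qed
      ultimately obtain c where c: "p' = (\<Sum>i\<in>{Suc j..n}. smult (c i) (g i))" using step.IH by blast
      have "p = smult a (g j) + (\<Sum>i\<in>{Suc j..n}. smult (c i) (g i))" using c by (simp add: p'_def)
      also have "\<dots> = (\<Sum>i\<in>{j..n}. smult ((c(j := a)) i) (g i))"
      proof -
        have e: "{j..n} = insert j {Suc j..n}" using jn by auto
        show ?thesis unfolding e by (subst sum.insert) (auto intro!: sum.cong)
      qed
      finally show "\<exists>c. p = (\<Sum>i\<in>{j..n}. smult (c i) (g i))" by blast
    qed
  qed
  from main[of 0] p show ?thesis by (simp add: atLeast0AtMost)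
qed

lemma indep_tri:
  fixes g :: "nat \<Rightarrow> real poly"
  assumes g0: "\<And>i t. i \<le> n \<Longrightarrow> t < i \<Longrightarrow> coeff (g i) t = 0"
      and g1: "\<And>i. i \<le> n \<Longrightarrow> coeff (g i) i \<noteq> 0"
      and s: "(\<Sum>i\<le>n. smult (c i) (g i)) = 0"
  shows "\<forall>i\<le>n. c i = 0"
proof -
  have "\<forall>i<j. i \<le> n \<longrightarrow> c i = 0" for j
  proof (induction j)
    case 0 then show ?case by simp
  next
    case (Suc j)
    show ?case
    proof (intro allI impI)
      fix i assume i: "i < Suc j" "i \<le> n"
      show "c i = 0"
      proof (cases "i < j")
        case True then show ?thesis using Suc i by blast
      next
        case False
        then have ij: "i = j" using i by simp
        have "0 = coeff (\<Sum>l\<le>n. smult (c l) (g l)) j" using s by simp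
        also have "\<dots> = (\<Sum>l\<le>n. c l * coeff (g l) j)" by (simp add: coeff_sum)
        also have "\<dots> = (\<Sum>l\<le>n. if l = j then c j * coeff (g j) j else 0)"
        proof (intro sum.cong refl)
          fix l assume l: "l \<in> {..n}"
          consider "l < j" | "l = j" | "j < l" by linarith
          then show "c l * coeff (g l) j = (if l = j then c j * coeff (g j) j else 0)"
          proof cases
            case 1 then show ?thesis using Suc.IH l by auto
          next
            case 2 then show ?thesis by simp
          next
            case 3 then show ?thesis using g0 l by auto
          qed
        qed
        also have "\<dots> = c j * coeff (g j) j" using i ij by simp
        finally show ?thesis using g1 i ij by simp
      qed
    qed
  qed
  then show ?thesis by blast
qed

lemma deg_M0:
  assumes "k \<le> n"
  shows "degree (coeff (Mp (Bp n k)) 0) \<le> n"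
proof -
  define q0 :: "real poly" where "q0 = [:1, -1:]"
  have pq: "poly Qm 0 = q0" by (simp add: Qm_def X1_def X2_def poly_0_coeff_0 q0_def one_pCons)
  have "coeff (Mp (Bp n k)) 0 = poly (Bp n k) q0"
    by (simp add: poly_0_coeff_0[symmetric] Mp_def poly_pcompose pq)
  also have "\<dots> = [:poly (Fpol (2*k+1) (n-k)) 1:] * poly (Hp k) q0"
  proof -
    have "poly Sx q0 = 1" by (simp add: Sx_def X1_def X2_def q0_def one_pCons)
    then show ?thesis by (simp add: Bp_def Fl_def poly_pcompose poly_lift one_pCons pcompose_pCons_0)
  qed
  finally have e: "coeff (Mp (Bp n k)) 0 = [:poly (Fpol (2*k+1) (n-k)) 1:] * poly (Hp k) q0" .
  have "degree (poly (Hp k) q0) \<le> k"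
    unfolding Hp_def poly_sum
  proof (rule degree_sum_bound)
    fix s assume s: "s \<in> {..k}"
    have "degree (poly (cst (hc k s) * (X1 ^ (k - s) * X2 ^ s)) q0)
        = degree ([:hc k s:] * (q0 ^ (k - s) * [:0,1:] ^ s))"
      by (simp add: cst_def X1_def X2_def poly_power)
    also have "\<dots> \<le> degree (q0 ^ (k - s) * [:0,1:] ^ s)" by (simp add: degree_smult_le)
    also have "\<dots> \<le> degree (q0 ^ (k - s)) + degree ([:0::real,1:] ^ s)" by (rule degree_mult_le)
    also have "\<dots> \<le> (k - s) + s"
      using degree_power_le[of q0 "k-s"] degree_power_le[of "[:0::real,1:]" s] by (simp add: q0_def)
    finally show "degree (poly (cst (hc k s) * (X1 ^ (k - s) * X2 ^ s)) q0) \<le> k" using s by simp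
  qed
  then show ?thesis unfolding e using assms by (simp add: degree_smult_le order_trans)
qed




lemma Mp_of_nat: "Mp (of_nat N) = of_nat N" by (simp add: Mp_def of_nat_poly)
lemma Mp_cst: "Mp (cst c) = cst c" by (simp add: Mp_def cst_def)

lemma expand_exists:
  assumes "k \<le> n"
  shows "\<exists>c. \<forall>y z. bbasis n k (1 - y - z, z) = (\<Sum>i\<le>n. bbasis n i (y, z) * c i)"
proof -
  obtain c where c: "coeff (Mp (Bp n k)) 0 = (\<Sum>i\<le>n. smult (c i) (gr n i))"
    using span_tri[of n "gr n" "coeff (Mp (Bp n k)) 0"] gr_props deg_M0[OF assms] by blast
  define Dp where "Dp = Mp (Bp n k) - (\<Sum>i\<le>n. cst (c i) * Bp n i)"
  define N where "N = n*n + 2*n"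
  have "Lop Dp = - of_nat N * Dp"
  proof -
    have "Lop (\<Sum>i\<le>n. cst (c i) * Bp n i) = (\<Sum>i\<le>n. - of_nat N * (cst (c i) * Bp n i))"
      unfolding Lop_sum cst_smult Lop_smult_const
      by (intro sum.cong refl) (simp add: Lop_Bp N_def cst_smult[symmetric] algebra_simps)
    also have "\<dots> = - of_nat N * (\<Sum>i\<le>n. cst (c i) * Bp n i)" by (simp add: sum_distrib_left)
    finally have 1: "Lop (\<Sum>i\<le>n. cst (c i) * Bp n i) = - of_nat N * (\<Sum>i\<le>n. cst (c i) * Bp n i)" .
    have 2: "Lop (Mp (Bp n k)) = - of_nat N * Mp (Bp n k)"
      unfolding Lop_Mp Lop_Bp[OF assms] N_def by (simp only: Mp_mult Mp_minus Mp_of_nat)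
    show ?thesis unfolding Dp_def Lop_diff 1 2 by (simp add: algebra_simps)
  qed
  then have L: "Lop Dp = [:[:- of_nat N:]:] * Dp" by (simp add: of_nat_poly)
  have "coeff Dp 0 = 0"
  proof -
    have "coeff (\<Sum>i\<le>n. cst (c i) * Bp n i) 0 = (\<Sum>i\<le>n. smult (c i) (gr n i))"
      unfolding coeff_sum by (intro sum.cong refl) (simp add: coeff_mult_0 cst_def gr_def)
    then show ?thesis unfolding Dp_def using c by simp
  qed
  with L have "Dp = 0" by (rule eig_zero)
  then have "ev (Mp (Bp n k)) y z = ev (\<Sum>i\<le>n. cst (c i) * Bp n i) y z" for y z
    unfolding Dp_def by simp
  then have "bbasis n k (1 - y - z, z) = (\<Sum>i\<le>n. bbasis n i (y, z) * c i)" for y z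
    by (simp add: ev_Mp ev_Bp ev_sum ev_mult ev_cst mult.commute)
  then show ?thesis by blast
qed

lemma ev_0_gr: "ev (Bp n i) 0 z = poly (gr n i) z"
  by (simp add: ev_def gr_def poly_0_coeff_0[symmetric])

lemma expand_unique:
  assumes "\<forall>y z. (\<Sum>i\<le>n. bbasis n i (y, z) * c i) = 0"
  shows "\<forall>i\<le>n. c i = 0"
proof (rule indep_tri[of n "gr n"])
  show "\<And>i t. i \<le> n \<Longrightarrow> t < i \<Longrightarrow> coeff (gr n i) t = 0" using gr_props by blast
  show "\<And>i. i \<le> n \<Longrightarrow> coeff (gr n i) i \<noteq> 0" using gr_props by blast
  have "poly (\<Sum>i\<le>n. smult (c i) (gr n i)) z = 0" for z
    using assms[rule_format, of 0 z] by (simp add: poly_sum ev_Bp[symmetric] ev_0_gr mult.commute)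
  then show "(\<Sum>i\<le>n. smult (c i) (gr n i)) = 0" using poly_all_0_iff_0 by blast
qed

lemma Mmat_char:
  assumes "k \<le> n"
  shows "\<And>y z. bbasis n k (1 - y - z, z) = (\<Sum>i\<le>n. bbasis n i (y, z) * Mmat n i k)"
proof -
  obtain c where c: "\<forall>y z. bbasis n k (1 - y - z, z) = (\<Sum>i\<le>n. bbasis n i (y, z) * c i)"
    using expand_exists[OF assms] by blast
  define c' where "c' i = (if i \<le> n then c i else 0)" for i
  define P where "P = (\<lambda>d :: nat \<Rightarrow> real. (\<forall>i>n. d i = 0) \<and>
       (\<forall>x. Mop (bbasis n k) x = (\<Sum>i\<le>n. bbasis n i x * d i)))"
  have Pc: "P c'"
    unfolding P_def
  proof (intro conjI allI impI)
    fix i :: nat assume "i > n" then show "c' i = 0" by (simp add: c'_def)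
  next
    fix x :: "real \<times> real"
    obtain y z where x: "x = (y, z)" by (cases x)
    show "Mop (bbasis n k) x = (\<Sum>i\<le>n. bbasis n i x * c' i)"
      unfolding x Mop_def using c by (simp add: c'_def)
  qed
  have uniq: "d = c'" if "P d" for d
  proof
    fix i
    have "\<forall>y z. (\<Sum>i\<le>n. bbasis n i (y, z) * (d i - c' i)) = 0"
    proof (intro allI)
      fix y z
      have "(\<Sum>i\<le>n. bbasis n i (y, z) * d i) = (\<Sum>i\<le>n. bbasis n i (y, z) * c' i)"
      proof -
        have "Mop (bbasis n k) (y, z) = (\<Sum>i\<le>n. bbasis n i (y, z) * d i)" using that unfolding P_def by blast
        moreover have "Mop (bbasis n k) (y, z) = (\<Sum>i\<le>n. bbasis n i (y, z) * c' i)" using Pc unfolding P_def by blast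
        ultimately show ?thesis by simp
      qed
      then show "(\<Sum>i\<le>n. bbasis n i (y, z) * (d i - c' i)) = 0"
        by (simp add: right_diff_distrib sum_subtractf)
    qed
    from expand_unique[OF this] have "\<forall>i\<le>n. d i = c' i" by simp
    moreover have "i > n \<Longrightarrow> d i = c' i" using that Pc unfolding P_def by simp
    ultimately show "d i = c' i" by (cases "i \<le> n") auto
  qed
  have "(THE d. P d) = c'" using Pc uniq by (rule the_equality)
  then have "Mmat n i k = c' i" for i unfolding Mmat_def P_def by simp
  then show "\<And>y z. bbasis n k (1 - y - z, z) = (\<Sum>i\<le>n. bbasis n i (y, z) * Mmat n i k)"
    using c by (simp add: c'_def)
qed

lemma hom_swap: "jacobi_hom 0 0 k (z - y) (z + y) = (-1)^k * jacobi_hom 0 0 k (y - z) (y + z)"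
proof -
  have a: "(z - y - (z + y)) / 2 = - y" "(z - y + (z + y)) / 2 = z"
          "(y - z - (y + z)) / 2 = - z" "(y - z + (y + z)) / 2 = y" by simp_all
  have "jacobi_hom 0 0 k (z - y) (z + y) = (\<Sum>s\<le>k. real (k choose (k - s)) * real (k choose s) * (- y) ^ s * z ^ (k - s))"
    unfolding jacobi_hom_def a by simp
  also have "\<dots> = (\<Sum>s\<le>k. real (k choose s) * real (k choose (k - s)) * (- y) ^ (k - s) * z ^ s)"
    by (rule sum.reindex_bij_witness[where i="\<lambda>s. k - s" and j="\<lambda>s. k - s"]) auto
  also have "\<dots> = (\<Sum>s\<le>k. (-1)^k * (real (k choose (k - s)) * real (k choose s) * (- z) ^ s * y ^ (k - s)))"
  proof (intro sum.cong refl)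
    fix s assume "s \<in> {..k}"
    then have sk: "s \<le> k" by simp
    have "(-1::real)^(k-s) = (-1)^k * (-1)^s"
    proof -
      obtain d where d: "k = s + d" using sk le_Suc_ex by blast
      have ss: "(-1::real)^s * (-1)^s = 1" by (induction s) auto
      have "(-1::real)^k * (-1)^s = ((-1)^s * (-1)^s) * (-1)^d" unfolding d power_add by (simp add: mult_ac)
      then show ?thesis unfolding ss d by simp
    qed
    then show "real (k choose s) * real (k choose (k - s)) * (- y) ^ (k - s) * z ^ s =
         (-1)^k * (real (k choose (k - s)) * real (k choose s) * (- z) ^ s * y ^ (k - s))"
      by (simp add: power_minus[of y] power_minus[of z] algebra_simps)
  qed
  also have "\<dots> = (-1)^k * jacobi_hom 0 0 k (y - z) (y + z)"
    unfolding jacobi_hom_def a by (simp add: sum_distrib_left)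
  finally show ?thesis .
qed

lemma bbasis_swap: "bbasis n k (z, y) = (-1)^k * bbasis n k (y, z)"
  unfolding bbasis_def using hom_swap[of k z y] by (simp add: add.commute)

lemma even_split: "(\<Sum>i\<le>n. (1 + (-1)^i) * f i) = 2 * (\<Sum>j | 2 * j \<le> n. f (2 * j) :: real)"
proof -
  have "(\<Sum>i\<le>n. (1 + (-1)^i) * f i) = (\<Sum>i\<le>n. if even i then 2 * f i else 0)"
    by (intro sum.cong refl) auto
  also have "\<dots> = (\<Sum>i\<in>{i\<in>{..n}. even i}. 2 * f i)" by (simp only: sum.inter_filter[OF finite_atMost])
  also have "{i\<in>{..n}. even i} = (\<lambda>j. 2 * j) ` {j. 2 * j \<le> n}" by (auto elim!: evenE)
  also have "(\<Sum>i\<in>(\<lambda>j. 2 * j) ` {j. 2 * j \<le> n}. 2 * f i) = (\<Sum>j | 2 * j \<le> n. 2 * f (2 * j))"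
    by (subst sum.reindex) (auto simp: inj_on_def)
  finally show ?thesis by (simp add: sum_distrib_left)
qed

lemma odd_split: "(\<Sum>i\<le>n. (1 - (-1)^i) * f i) = 2 * (\<Sum>j | 2 * j + 1 \<le> n. f (2 * j + 1) :: real)"
proof -
  have "(\<Sum>i\<le>n. (1 - (-1)^i) * f i) = (\<Sum>i\<le>n. if odd i then 2 * f i else 0)"
    by (intro sum.cong refl) auto
  also have "\<dots> = (\<Sum>i\<in>{i\<in>{..n}. odd i}. 2 * f i)" by (simp only: sum.inter_filter[OF finite_atMost])
  also have "{i\<in>{..n}. odd i} = (\<lambda>j. 2 * j + 1) ` {j. 2 * j + 1 \<le> n}" by (auto elim!: oddE)
  also have "(\<Sum>i\<in>(\<lambda>j. 2 * j + 1) ` {j. 2 * j + 1 \<le> n}. 2 * f i) = (\<Sum>j | 2 * j + 1 \<le> n. 2 * f (2 * j + 1))"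
    by (subst sum.reindex) (auto simp: inj_on_def)
  finally show ?thesis by (simp add: sum_distrib_left)
qed

lemma pos_comb:
  fixes l0 l1 l2 t0 t1 t2 :: real
  assumes "l0 \<ge> 0" "l1 \<ge> 0" "l2 \<ge> 0" "l0 + l1 + l2 = 1" "t0 > 0" "t1 > 0" "t2 > 0"
  shows "l0*t0 + l1*t1 + l2*t2 > 0"
proof -
  define m where "m = min t0 (min t1 t2)"
  have m: "m > 0" "m \<le> t0" "m \<le> t1" "m \<le> t2" using assms by (auto simp: m_def)
  have "l0*m \<le> l0*t0" "l1*m \<le> l1*t1" "l2*m \<le> l2*t2"
    using m assms by (auto intro: mult_left_mono)
  moreover have "l0*m + l1*m + l2*m = m" using assms by (simp add: distrib_right[symmetric])
  ultimately show ?thesis using m by linarith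
qed

lemma affine_cases:
  assumes bij: "bij_betw (affine_map2 a b c d e f) Tref Tref"
  shows "(a,b,c,d,e,f) \<in> {(1,0,0,1,0,0), (0,1,1,0,0,0), (-1,-1,0,1,1,0), (-1,-1,1,0,1,0), (0,1,-1,-1,0,1), (1,0,-1,-1,0,1)}"
proof -
  let ?F = "affine_map2 a b c d e f"
  have F: "?F (x1, x2) = (a*x1 + b*x2 + e, c*x1 + d*x2 + f)" for x1 x2 by (simp add: affine_map2_def)
  have into: "?F x \<in> Tref" if "x \<in> Tref" for x using bij that by (auto simp: bij_betw_def)
  have onto: "\<exists>x\<in>Tref. ?F x = v" if "v \<in> Tref" for v
  proof -
    have "v \<in> ?F ` Tref" using bij that by (simp add: bij_betw_def)
    then show ?thesis by blast
  qed
  define p0 where "p0 = (e, f)"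
  define p1 where "p1 = (a + e, c + f)"
  define p2 where "p2 = (b + e, d + f)"
  have T: "p0 \<in> Tref" "p1 \<in> Tref" "p2 \<in> Tref"
    using into[of "(0,0)"] into[of "(1,0)"] into[of "(0,1)"] by (auto simp: Tref_def F p0_def p1_def p2_def)
  have hit: "v \<in> {p0, p1, p2}"
    if vT: "v \<in> Tref" and phi: "\<And>p. p \<in> Tref \<Longrightarrow> p \<noteq> v \<Longrightarrow> \<phi> p > 0"
       and phiv: "\<phi> v = 0"
       and lin: "\<And>x1 x2. \<phi> (?F (x1, x2)) = (1 - x1 - x2) * \<phi> p0 + x1 * \<phi> p1 + x2 * \<phi> p2"
    for v \<phi>
  proof (rule ccontr)
    assume "v \<notin> {p0, p1, p2}"
    then have "p0 \<noteq> v" "p1 \<noteq> v" "p2 \<noteq> v" by auto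
    then have pos: "\<phi> p0 > 0" "\<phi> p1 > 0" "\<phi> p2 > 0" using phi T by blast+
    obtain x where x: "x \<in> Tref" "?F x = v" using onto[OF vT] by blast
    obtain x1 x2 where xx: "x = (x1, x2)" by (cases x)
    have "x1 \<ge> 0" "x2 \<ge> 0" "1 - x1 - x2 \<ge> 0" using x(1) by (auto simp: Tref_def xx)
    then have "(1 - x1 - x2) * \<phi> p0 + x1 * \<phi> p1 + x2 * \<phi> p2 > 0"
      using pos by (intro pos_comb) auto
    then show False using lin[of x1 x2] x(2) phiv by (simp add: xx)
  qed
  have h0: "(0,0) \<in> {p0, p1, p2}"
  proof (rule hit[where \<phi>="\<lambda>p. fst p + snd p"])
    fix p :: "real \<times> real" assume "p \<in> Tref" "p \<noteq> (0,0)"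
    then show "fst p + snd p > 0" by (cases p) (auto simp: Tref_def)
  qed (auto simp: Tref_def F p0_def p1_def p2_def algebra_simps)
  have h1: "(1,0) \<in> {p0, p1, p2}"
  proof (rule hit[where \<phi>="\<lambda>p. 1 - fst p"])
    fix p :: "real \<times> real" assume "p \<in> Tref" "p \<noteq> (1,0)"
    then show "1 - fst p > 0" by (cases p) (auto simp: Tref_def)
  qed (auto simp: Tref_def F p0_def p1_def p2_def algebra_simps)
  have h2: "(0,1) \<in> {p0, p1, p2}"
  proof (rule hit[where \<phi>="\<lambda>p. 1 - snd p"])
    fix p :: "real \<times> real" assume "p \<in> Tref" "p \<noteq> (0,1)"
    then show "1 - snd p > 0" by (cases p) (auto simp: Tref_def)
  qed (auto simp: Tref_def F p0_def p1_def p2_def algebra_simps)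
  from h0 h1 h2 show ?thesis unfolding p0_def p1_def p2_def
    apply (simp only: insert_iff empty_iff prod.inject simp_thms)
    apply (elim disjE conjE)
    apply (simp_all add: eq_diff_eq[symmetric] add.commute)
    done
qed

lemma tot_sym_of_MR:
  assumes M: "\<And>y z. u (1 - y - z, z) = u (y, z)" and R: "\<And>y z. u (z, y) = u (y, z)"
  shows "totally_symmetric u"
  unfolding totally_symmetric_def
proof (intro allI impI ballI)
  fix a b c d e f :: real and x :: "real \<times> real"
  assume bij: "bij_betw (affine_map2 a b c d e f) Tref Tref"
  obtain x1 x2 where x: "x = (x1, x2)" by (cases x)
  have m1: "u (1 - x1 - x2, x2) = u (x1, x2)" by (rule M)
  have r1: "u (x2, x1) = u (x1, x2)" by (rule R)
  have m2: "u (1 - x2 - x1, x1) = u (x2, x1)" by (rule M)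
  have r2: "u (x2, 1 - x1 - x2) = u (1 - x1 - x2, x2)" by (rule R)
  have r3: "u (x1, 1 - x2 - x1) = u (1 - x2 - x1, x1)" by (rule R)
  have e: "1 - x2 - x1 = 1 - x1 - x2" by simp
  from affine_cases[OF bij] show "u (affine_map2 a b c d e f x) = u x"
    using m1 r1 m2 r2 r3 unfolding e
    by (auto simp: x affine_map2_def algebra_simps)
qed

lemma rform_even:
  assumes "K \<le> n"
  shows "2 * (\<Sum>j | 2 * j \<le> n. Mmat n (2 * j) K * bbasis n (2 * j) (y, z)) + bbasis n K (y, z)
     = bbasis n K (y, z) + bbasis n K (1 - y - z, z) + bbasis n K (1 - z - y, y)"
proof -
  have "bbasis n K (1 - y - z, z) + bbasis n K (1 - z - y, y)
      = (\<Sum>i\<le>n. (1 + (-1)^i) * (bbasis n i (y, z) * Mmat n i K))"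
  proof -
    have 1: "bbasis n K (1 - y - z, z) = (\<Sum>i\<le>n. bbasis n i (y, z) * Mmat n i K)" by (rule Mmat_char[OF assms])
    have 2: "bbasis n K (1 - z - y, y) = (\<Sum>i\<le>n. (-1)^i * (bbasis n i (y, z) * Mmat n i K))"
      unfolding Mmat_char[OF assms] by (intro sum.cong refl) (simp only: bbasis_swap[of n _ z y] mult.assoc)
    show ?thesis unfolding 1 2 sum.distrib[symmetric] by (simp only: distrib_right mult_1_left)
  qed
  also have "\<dots> = 2 * (\<Sum>j | 2 * j \<le> n. Mmat n (2 * j) K * bbasis n (2 * j) (y, z))"
    unfolding even_split by (simp add: mult.commute)
  finally show ?thesis by simp
qed

lemma rform_odd:
  assumes "K \<le> n"
  shows "- 2 * (\<Sum>j | 2 * j + 1 \<le> n. Mmat n (2 * j + 1) K * bbasis n (2 * j + 1) (y, z)) + bbasis n K (y, z)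
     = bbasis n K (y, z) - bbasis n K (1 - y - z, z) + bbasis n K (1 - z - y, y)"
proof -
  have "bbasis n K (1 - y - z, z) - bbasis n K (1 - z - y, y)
      = (\<Sum>i\<le>n. (1 - (-1)^i) * (bbasis n i (y, z) * Mmat n i K))"
  proof -
    have 1: "bbasis n K (1 - y - z, z) = (\<Sum>i\<le>n. bbasis n i (y, z) * Mmat n i K)" by (rule Mmat_char[OF assms])
    have 2: "bbasis n K (1 - z - y, y) = (\<Sum>i\<le>n. (-1)^i * (bbasis n i (y, z) * Mmat n i K))"
      unfolding Mmat_char[OF assms] by (intro sum.cong refl) (simp only: bbasis_swap[of n _ z y] mult.assoc)
    show ?thesis unfolding 1 2 sum_subtractf[symmetric] by (simp only: left_diff_distrib mult_1_left)
  qed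
  also have "\<dots> = 2 * (\<Sum>j | 2 * j + 1 \<le> n. Mmat n (2 * j + 1) K * bbasis n (2 * j + 1) (y, z))"
    unfolding odd_split by (simp add: mult.commute)
  finally show ?thesis by simp
qed

theorem corollary17:
  fixes n :: nat
  shows "(\<forall>k. 2 * k \<le> n \<longrightarrow>
            totally_symmetric (\<lambda>x. 2 * (\<Sum>j | 2 * j \<le> n. Mmat n (2 * j) (2 * k) * bbasis n (2 * j) x)
                                    + bbasis n (2 * k) x))
       \<and> (\<forall>k. 2 * k + 1 \<le> n \<longrightarrow>
            (let r = (\<lambda>x. - 2 * (\<Sum>j | 2 * j + 1 \<le> n.
                                   Mmat n (2 * j + 1) (2 * k + 1) * bbasis n (2 * j + 1) x)
                         + bbasis n (2 * k + 1) x)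
             in Mop r = (\<lambda>x. - r x) \<and> Rop r = (\<lambda>x. - r x)))"
proof (intro conjI allI impI)
  fix k assume kn: "2 * k \<le> n"
  define b where "b = bbasis n (2 * k)"
  have par: "b (z, y) = b (y, z)" for y z using bbasis_swap[of n "2*k" z y] unfolding b_def by simp
  let ?r = "\<lambda>x. 2 * (\<Sum>j | 2 * j \<le> n. Mmat n (2 * j) (2 * k) * bbasis n (2 * j) x) + bbasis n (2 * k) x"
  have rf: "?r (y, z) = b (y, z) + b (1 - y - z, z) + b (1 - z - y, y)" for y z
    unfolding b_def by (rule rform_even[OF kn])
  show "totally_symmetric ?r"
  proof (rule tot_sym_of_MR)
    fix y z :: real
    have "b (1 - z - (1 - y - z), 1 - y - z) = b (1 - z - y, y)"
      using par[of "1 - y - z" y] by (simp add: algebra_simps)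
    then show "?r (1 - y - z, z) = ?r (y, z)" unfolding rf by (simp add: algebra_simps)
    show "?r (z, y) = ?r (y, z)" unfolding rf using par[of y z] by (simp add: algebra_simps)
  qed
next
  fix k assume kn: "2 * k + 1 \<le> n"
  define b where "b = bbasis n (2 * k + 1)"
  have par: "b (z, y) = - b (y, z)" for y z using bbasis_swap[of n "2*k+1" z y] unfolding b_def by simp
  define r where "r = (\<lambda>x. - 2 * (\<Sum>j | 2 * j + 1 \<le> n.
                                   Mmat n (2 * j + 1) (2 * k + 1) * bbasis n (2 * j + 1) x)
                         + bbasis n (2 * k + 1) x)"
  have rf: "r (y, z) = b (y, z) - b (1 - y - z, z) + b (1 - z - y, y)" for y z
    unfolding b_def r_def by (rule rform_odd[OF kn])
  have "Mop r = (\<lambda>x. - r x)"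
  proof
    fix x :: "real \<times> real"
    obtain y z where x: "x = (y, z)" by (cases x)
    have "b (1 - z - (1 - y - z), 1 - y - z) = - b (1 - z - y, y)"
      using par[of "1 - y - z" y] by (simp add: algebra_simps)
    then show "Mop r x = - r x" unfolding x Mop_def by (simp add: rf algebra_simps)
  qed
  moreover have "Rop r = (\<lambda>x. - r x)"
  proof
    fix x :: "real \<times> real"
    obtain y z where x: "x = (y, z)" by (cases x)
    show "Rop r x = - r x" unfolding x Rop_def using par[of z y] by (simp add: rf algebra_simps)
  qed
  ultimately show "let r = (\<lambda>x. - 2 * (\<Sum>j | 2 * j + 1 \<le> n.
                                   Mmat n (2 * j + 1) (2 * k + 1) * bbasis n (2 * j + 1) x)
                         + bbasis n (2 * k + 1) x)
             in Mop r = (\<lambda>x. - r x) \<and> Rop r = (\<lambda>x. - r x)"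
    unfolding r_def Let_def by simp
qed


end
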